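(* Let $\Gamma$ be a connected finite simple graph on $N\ge3$ vertices with minimum degree $d=2$ and $\varepsilon=\frac12$. If there are distinct vertices $u\sim v\sim w$ with $\deg u=\deg v=\deg w=2$, then $\Gamma$ is the cycle $C_3$ or the cycle $C_6$.
   Context: For a finite simple graph $\Gamma=(V,E)$ without isolated vertices, $\deg v$ is the number of neighbours of $v$ and $\mathcal N(v)=\{w\in V: w\sim v\}$. The normalized Laplacian acts on functions $f:V\to\mathbb R$ by $\Delta f(v)=f(v)-\frac{1}{\deg v}\sum_{w\sim v}f(w)$; its eigenvalues are $0=\lambda_1\le\lambda_2\le\dots\le\lambda_N$, and $\varepsilon:=\min_i|1-\lambda_i|$. $d$ denotes the minimum vertex degree. *)

theory Defs
  imports Complex_Main
begin

definition simple_graph :: "'a set \<Rightarrow> ('a \<Rightarrow> 'a \<Rightarrow> bool) \<Rightarrow> bool" where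
  "simple_graph V E \<longleftrightarrow> finite V \<and> (\<forall>u v. E u v \<longrightarrow> u \<in> V \<and> v \<in> V)
     \<and> (\<forall>u v. E u v \<longrightarrow> E v u) \<and> (\<forall>v. \<not> E v v)"

definition connected_graph :: "'a set \<Rightarrow> ('a \<Rightarrow> 'a \<Rightarrow> bool) \<Rightarrow> bool" where
  "connected_graph V E \<longleftrightarrow> (\<forall>u\<in>V. \<forall>v\<in>V. E\<^sup>*\<^sup>* u v)"

definition nbrs :: "'a set \<Rightarrow> ('a \<Rightarrow> 'a \<Rightarrow> bool) \<Rightarrow> 'a \<Rightarrow> 'a set" where
  "nbrs V E v = {w \<in> V. E v w}"

definition deg :: "'a set \<Rightarrow> ('a \<Rightarrow> 'a \<Rightarrow> bool) \<Rightarrow> 'a \<Rightarrow> nat" where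
  "deg V E v = card (nbrs V E v)"

definition min_degree :: "'a set \<Rightarrow> ('a \<Rightarrow> 'a \<Rightarrow> bool) \<Rightarrow> nat" where
  "min_degree V E = Min (deg V E ` V)"

definition norm_laplacian :: "'a set \<Rightarrow> ('a \<Rightarrow> 'a \<Rightarrow> bool) \<Rightarrow> ('a \<Rightarrow> real) \<Rightarrow> 'a \<Rightarrow> real" where
  "norm_laplacian V E f v = f v - (\<Sum>w\<in>nbrs V E v. f w) / real (deg V E v)"

text \<open>Eigenvalues of the normalized Laplacian (as an operator on real functions on V;
  it is self-adjoint w.r.t. a weighted inner product, so all eigenvalues are real).\<close>
definition laplacian_eigenvalues :: "'a set \<Rightarrow> ('a \<Rightarrow> 'a \<Rightarrow> bool) \<Rightarrow> real set" where
  "laplacian_eigenvalues V E = {mu. \<exists>f. (\<exists>v\<in>V. f v \<noteq> 0) \<and>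
      (\<forall>v\<in>V. norm_laplacian V E f v = mu * f v)}"

definition spectral_eps :: "'a set \<Rightarrow> ('a \<Rightarrow> 'a \<Rightarrow> bool) \<Rightarrow> real" where
  "spectral_eps V E = Min ((\<lambda>mu. \<bar>1 - mu\<bar>) ` laplacian_eigenvalues V E)"

definition cycle_edge :: "nat \<Rightarrow> nat \<Rightarrow> nat \<Rightarrow> bool" where
  "cycle_edge n i j \<longleftrightarrow> i < n \<and> j < n \<and> (j = (i + 1) mod n \<or> i = (j + 1) mod n)"

definition is_cycle_graph :: "'a set \<Rightarrow> ('a \<Rightarrow> 'a \<Rightarrow> bool) \<Rightarrow> nat \<Rightarrow> bool" where
  "is_cycle_graph V E n \<longleftrightarrow> (\<exists>\<phi>. bij_betw \<phi> V {0..<n} \<and>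
      (\<forall>u\<in>V. \<forall>v\<in>V. E u v \<longleftrightarrow> cycle_edge n (\<phi> u) (\<phi> v)))"

end

theory Submission
  imports Defs "HOL-Analysis.Analysis" "HOL-Library.Function_Algebras"
begin


definition Pop :: "'a set \<Rightarrow> ('a\<Rightarrow>'a\<Rightarrow>bool) \<Rightarrow> ('a \<Rightarrow> real) \<Rightarrow> 'a \<Rightarrow> real" where
  "Pop V E f v = (\<Sum>w\<in>nbrs V E v. f w) / real (deg V E v)"

definition ip :: "'a set \<Rightarrow> ('a\<Rightarrow>'a\<Rightarrow>bool) \<Rightarrow> ('a \<Rightarrow> real) \<Rightarrow> ('a \<Rightarrow> real) \<Rightarrow> real" where
  "ip V E f g = (\<Sum>v\<in>V. real (deg V E v) * f v * g v)"

locale gr =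
  fixes V :: "'a set" and E :: "'a \<Rightarrow> 'a \<Rightarrow> bool"
  assumes sg: "simple_graph V E"
    and degpos: "\<And>v. v \<in> V \<Longrightarrow> deg V E v \<ge> 1"
begin

abbreviation "P \<equiv> Pop V E"
abbreviation "N \<equiv> nbrs V E"
abbreviation "dg \<equiv> deg V E"
abbreviation "ipp \<equiv> ip V E"

lemma finV: "finite V" using sg by (simp add: simple_graph_def)
lemma Esym: "E a b \<Longrightarrow> E b a" using sg by (simp add: simple_graph_def)
lemma EV: "E a b \<Longrightarrow> a \<in> V \<and> b \<in> V" using sg by (simp add: simple_graph_def)
lemma Eirr: "\<not> E a a" using sg by (simp add: simple_graph_def)
lemma N_sub: "N v \<subseteq> V" by (auto simp: nbrs_def)
lemma finN: "finite (N v)" using finV N_sub finite_subset by blast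
lemma inN: "w \<in> N v \<longleftrightarrow> E v w" using EV by (auto simp: nbrs_def)

lemma P_cong: "(\<And>x. x \<in> V \<Longrightarrow> f x = g x) \<Longrightarrow> P f v = P g v"
  unfolding Pop_def by (intro arg_cong[where f="\<lambda>x. x / _"] sum.cong) (auto simp: nbrs_def)

lemma ip_cong: "(\<And>x. x \<in> V \<Longrightarrow> f x = f' x) \<Longrightarrow> (\<And>x. x \<in> V \<Longrightarrow> g x = g' x) \<Longrightarrow> ipp f g = ipp f' g'"
  unfolding ip_def by (intro sum.cong) auto

lemma P_lin: "P (\<lambda>x. a * f x + b * g x) v = a * P f v + b * P g v"
  unfolding Pop_def by (simp add: sum.distrib sum_distrib_left add_divide_distrib)

lemma P_scale: "P (\<lambda>x. a * f x) v = a * P f v"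
  using P_lin[of a f 0 f v] by simp

lemma ip_lin1: "ipp (\<lambda>x. a * f x + b * g x) h = a * ipp f h + b * ipp g h"
  unfolding ip_def by (simp add: sum.distrib sum_distrib_left algebra_simps)

lemma ip_sym: "ipp f g = ipp g f"
  unfolding ip_def by (simp add: algebra_simps)

lemma term_nn: "0 \<le> real (dg x) * f x * f x"
  by (metis mult.assoc mult_nonneg_nonneg of_nat_0_le_iff zero_le_square)

lemma ip_nonneg: "ipp f f \<ge> 0"
  unfolding ip_def by (intro sum_nonneg) (rule term_nn)

lemma ip_term_le: "v \<in> V \<Longrightarrow> real (dg v) * f v * f v \<le> ipp f f"
  unfolding ip_def by (rule member_le_sum[OF _ _ finV]) (auto intro: term_nn)

lemma ip_zero: "ipp f f = 0 \<Longrightarrow> v \<in> V \<Longrightarrow> f v = 0"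
proof -
  assume z: "ipp f f = 0" and v: "v \<in> V"
  have "real (dg v) * f v * f v \<le> 0" using ip_term_le[OF v, of f] z by simp
  moreover have "real (dg v) \<ge> 1" using degpos[OF v] by simp
  moreover have "f v * f v \<le> real (dg v) * (f v * f v)"
    using mult_right_mono[of 1 "real (dg v)" "f v * f v"] \<open>real (dg v) \<ge> 1\<close> by simp
  ultimately have "f v * f v \<le> 0" by (simp add: mult.assoc)
  hence "f v * f v = 0" using zero_le_square[of "f v"] by linarith
  thus "f v = 0" by simp
qed

lemma ip_pos: "v \<in> V \<Longrightarrow> f v \<noteq> 0 \<Longrightarrow> ipp f f > 0"
  using ip_zero ip_nonneg by (metis less_eq_real_def)

lemma self_adj: "ipp (P f) g = ipp f (P g)"
proof -
  have "ipp (P f) g = (\<Sum>v\<in>V. \<Sum>w\<in>V. if E v w then f w * g v else 0)"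
    unfolding ip_def Pop_def
  proof (intro sum.cong refl)
    fix v assume v: "v \<in> V"
    have "real (dg v) * ((\<Sum>w\<in>N v. f w) / real (dg v)) * g v = (\<Sum>w\<in>N v. f w) * g v"
      using degpos[OF v] by simp
    also have "\<dots> = (\<Sum>w\<in>N v. f w * g v)" by (simp add: sum_distrib_right)
    also have "\<dots> = (\<Sum>w\<in>V. if E v w then f w * g v else 0)"
      unfolding nbrs_def using finV by (simp add: sum.inter_filter)
    finally show "real (dg v) * ((\<Sum>w\<in>N v. f w) / real (dg v)) * g v = (\<Sum>w\<in>V. if E v w then f w * g v else 0)" .
  qed
  also have "\<dots> = (\<Sum>w\<in>V. \<Sum>v\<in>V. if E v w then f w * g v else 0)" by (rule sum.swap)
  also have "\<dots> = ipp f (P g)"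
    unfolding ip_def Pop_def
  proof (intro sum.cong refl)
    fix w assume w: "w \<in> V"
    have "real (dg w) * f w * ((\<Sum>v\<in>N w. g v) / real (dg w)) = f w * (\<Sum>v\<in>N w. g v)"
      using degpos[OF w] by simp
    also have "\<dots> = (\<Sum>v\<in>N w. f w * g v)" by (simp add: sum_distrib_left)
    also have "\<dots> = (\<Sum>v\<in>V. if E w v then f w * g v else 0)"
      unfolding nbrs_def using finV by (simp add: sum.inter_filter)
    also have "\<dots> = (\<Sum>v\<in>V. if E v w then f w * g v else 0)"
      by (intro sum.cong refl) (metis Esym)
    finally show "(\<Sum>v\<in>V. if E v w then f w * g v else 0) = real (dg w) * f w * ((\<Sum>v\<in>N w. g v) / real (dg w))" by simp
  qed
  finally show ?thesis .
qed


lemma ip_scale: "ipp (\<lambda>x. a * f x) g = a * ipp f g"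
  unfolding ip_def by (simp add: sum_distrib_left algebra_simps)

lemma ip_quad: "ipp (\<lambda>x. g x + t * h x) (\<lambda>x. g x + t * h x) = ipp g g + 2*t*ipp g h + t^2 * ipp h h"
proof -
  have l: "ipp (\<lambda>x. g x + t * h x) F = ipp g F + t * ipp h F" for F
    using ip_lin1[of 1 g t h F] by simp
  have "ipp (\<lambda>x. g x + t * h x) (\<lambda>x. g x + t * h x) = ipp (\<lambda>x. g x + t * h x) g + t * ipp (\<lambda>x. g x + t * h x) h"
    using l ip_sym by metis
  also have "\<dots> = ipp g g + t * ipp h g + t * (ipp g h + t * ipp h h)" using l by simp
  finally show ?thesis using ip_sym[of h g] by (simp add: power2_eq_square algebra_simps)
qed

lemma P_add_fun: "P (\<lambda>x. g x + t * h x) = (\<lambda>v. P g v + t * P h v)"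
  using P_lin[of 1 g t h] by auto

lemma P_scale_fun: "P (\<lambda>x. a * f x) = (\<lambda>v. a * P f v)"
  using P_scale by auto

lemma variation:
  assumes nn: "\<And>h. ipp (P h) (P h) - k * ipp h h \<ge> 0"
    and z: "ipp (P g) (P g) - k * ipp g g = 0" and v: "v \<in> V"
  shows "P (P g) v = k * g v"
proof -
  define A where "A = (\<lambda>x. P (P g) x - k * g x)"
  have key: "ipp A h = ipp (P g) (P h) - k * ipp g h" for h
  proof -
    have "ipp A h = ipp (\<lambda>x. 1 * P (P g) x + (-k) * g x) h" unfolding A_def by simp
    also have "\<dots> = ipp (P (P g)) h - k * ipp g h" using ip_lin1[of 1 "P (P g)" "-k" g h] by simp
    also have "ipp (P (P g)) h = ipp (P g) (P h)" by (rule self_adj)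
    finally show ?thesis .
  qed
  have ineq: "0 \<le> 2*t*ipp A h + t^2 * (ipp (P h) (P h) - k * ipp h h)" for h t
  proof -
    have "0 \<le> ipp (P (\<lambda>x. g x + t * h x)) (P (\<lambda>x. g x + t * h x)) - k * ipp (\<lambda>x. g x + t * h x) (\<lambda>x. g x + t * h x)"
      by (rule nn)
    also have "\<dots> = (ipp (P g) (P g) - k * ipp g g) + 2*t*(ipp (P g) (P h) - k * ipp g h) + t^2 * (ipp (P h) (P h) - k * ipp h h)"
      unfolding P_add_fun ip_quad by (simp add: algebra_simps)
    finally show ?thesis using z key by simp
  qed
  define aa where "aa = ipp A A"
  define bb where "bb = ipp (P A) (P A) - k * ipp A A"
  have b0: "bb \<ge> 0" unfolding bb_def by (rule nn)
  have bp: "bb + 1 > 0" using b0 by simp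
  define t where "t = -aa/(bb+1)"
  have t1: "t * (bb+1) = -aa" unfolding t_def using bp by simp
  have "0 \<le> 2*t*aa + t^2 * bb"
    using ineq[of t A] unfolding aa_def bb_def by simp
  hence "0 \<le> (2*t*aa + t^2 * bb) * (bb+1)^2"
    by simp
  also have "\<dots> = 2*aa*(t*(bb+1))*(bb+1) + (t*(bb+1))^2*bb"
    by (simp add: power2_eq_square algebra_simps)
  also have "\<dots> = -(aa^2 * (bb + 2))" unfolding t1 by (simp add: power2_eq_square algebra_simps)
  finally have "aa^2 * (bb+2) \<le> 0" by simp
  moreover have "bb + 2 > 0" using b0 by simp
  ultimately have "aa^2 \<le> 0" by (simp add: mult_le_0_iff)
  hence "aa = 0" by simp
  hence "A v = 0" using ip_zero v unfolding aa_def by blast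
  thus ?thesis unfolding A_def by simp
qed

end

locale gspec = gr +
  assumes H: "\<And>h c. (\<exists>v\<in>V. h v \<noteq> 0) \<Longrightarrow> (\<forall>v\<in>V. P h v = c * h v) \<Longrightarrow> 1/2 \<le> \<bar>c\<bar>"
    and Vne: "V \<noteq> {}"
begin

lemma psd: "ipp (P g) (P g) - 1/4 * ipp g g \<ge> 0"
proof -
  define R where "R = (\<lambda>g. ipp (P g) (P g) - 1/4 * ipp g g)"
  define X where "X = product_topology (\<lambda>_. euclideanreal) V"
  define K where "K = {g \<in> topspace X. ipp g g = 1}"
  have proj: "continuous_map X euclideanreal (\<lambda>g. g w)" if "w \<in> V" for w
    unfolding X_def using continuous_map_product_projection[OF that, of "\<lambda>_. euclideanreal"] by simp
  have contP: "continuous_map X euclideanreal (\<lambda>g. P g v)" for v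
  proof -
    have "continuous_map X euclideanreal (\<lambda>g. (\<Sum>w\<in>N v. g w))"
      by (rule continuous_map_sum[OF finN]) (use proj N_sub in blast)
    hence "continuous_map X euclideanreal (\<lambda>g. (\<Sum>w\<in>N v. g w) * inverse (real (dg v)))"
      by (rule continuous_map_real_mult) simp
    thus ?thesis unfolding Pop_def divide_inverse .
  qed
  have contT: "continuous_map X euclideanreal (\<lambda>g. real (dg x) * F g x * F g x)"
    if "\<And>x. x \<in> V \<Longrightarrow> continuous_map X euclideanreal (\<lambda>g. F g x)" "x \<in> V" for F x
    by (intro continuous_map_real_mult that continuous_map_canonical_const)
  have contI: "continuous_map X euclideanreal (\<lambda>g. ipp g g)"
    unfolding ip_def by (rule continuous_map_sum[OF finV]) (rule contT[OF proj])
  have contPP: "continuous_map X euclideanreal (\<lambda>g. ipp (P g) (P g))"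
    unfolding ip_def by (rule continuous_map_sum[OF finV]) (rule contT[OF contP])
  have contR: "continuous_map X euclideanreal R"
    unfolding R_def by (intro continuous_map_diff contPP continuous_map_real_mult contI continuous_map_canonical_const)
  have clK: "closedin X K"
    unfolding K_def using closedin_continuous_map_preimage[OF contI, of "{1}"]
    by (simp add: closed_closedin[symmetric])
  have KB: "K \<subseteq> PiE V (\<lambda>_. {-1..1})"
  proof
    fix g assume g: "g \<in> K"
    hence gt: "g \<in> PiE V (\<lambda>_. UNIV)" and gi: "ipp g g = 1" unfolding K_def X_def by auto
    have "g v \<in> {-1..1}" if v: "v \<in> V" for v
    proof -
      have "real (dg v) * g v * g v \<le> 1" using ip_term_le[OF v, of g] gi by simp
      moreover have "real (dg v) \<ge> 1" using degpos[OF v] by simp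
      moreover have "g v * g v \<le> real (dg v) * (g v * g v)"
        using mult_right_mono[of 1 "real (dg v)" "g v * g v"] \<open>real (dg v) \<ge> 1\<close> by simp
      ultimately have "g v * g v \<le> 1" by (simp add: mult.assoc)
      hence "\<bar>g v\<bar> \<le> 1" by (metis abs_square_le_1 power2_eq_square)
      thus ?thesis by auto
    qed
    thus "g \<in> PiE V (\<lambda>_. {-1..1})" using gt by (auto simp: PiE_def)
  qed
  have cB: "compactin X (PiE V (\<lambda>_. {-1..1::real}))"
    unfolding X_def by (simp add: compactin_PiE)
  have cK: "compactin X K" by (rule closed_compactin[OF cB KB clK])
  have cRK: "compact (R ` K)" using image_compactin[OF cK contR] by simp
  obtain v0 where v0: "v0 \<in> V" using Vne by blast
  define e where "e = (\<lambda>x. if x = v0 then 1 / sqrt (real (dg v0)) else if x \<in> V then 0 else undefined)"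
  have "ipp e e = (\<Sum>x\<in>V. if x = v0 then 1 else 0)"
    unfolding ip_def e_def
    using degpos[OF v0] by (intro sum.cong refl) (auto simp: field_simps)
  also have "\<dots> = 1" using v0 finV by simp
  finally have "e \<in> K" unfolding K_def X_def e_def using v0 by (auto simp: PiE_def extensional_def)
  hence "R ` K \<noteq> {}" by auto
  then obtain r where r: "r \<in> R ` K" "\<forall>t\<in>R ` K. r \<le> t" using compact_attains_inf[OF cRK] by blast
  then obtain g0 where g0: "g0 \<in> K" "\<forall>g\<in>K. R g0 \<le> R g" by auto
  define m where "m = R g0"
  have g0i: "ipp g0 g0 = 1" using g0 unfolding K_def by simp
  have claim: "R h - m * ipp h h \<ge> 0" for h
  proof (cases "ipp h h = 0")
    case True
    hence hz: "h x = 0" if "x \<in> V" for x using ip_zero that by blast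
    have "P h x = P (\<lambda>_. 0) x" for x using hz by (intro P_cong) auto
    hence "P h x = 0" for x by (simp add: Pop_def)
    hence "ipp (P h) (P h) = 0" by (simp add: ip_def)
    thus ?thesis using True unfolding R_def by simp
  next
    case False
    hence pos: "ipp h h > 0" using ip_nonneg[of h] by linarith
    define s where "s = sqrt (ipp h h)"
    have s0: "s > 0" unfolding s_def using pos by simp
    have ss: "s^2 = ipp h h" unfolding s_def using pos by simp
    define h' where "h' = restrict (\<lambda>x. (1/s) * h x) V"
    have e1: "ipp h' h' = ipp (\<lambda>x. (1/s) * h x) (\<lambda>x. (1/s) * h x)"
      unfolding h'_def by (rule ip_cong) auto
    have e2: "ipp (P h') (P h') = ipp (P (\<lambda>x. (1/s) * h x)) (P (\<lambda>x. (1/s) * h x))"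
      unfolding h'_def by (intro ip_cong P_cong) auto
    have i1: "ipp h' h' = 1" unfolding e1 ip_scale
      using ip_sym[of h "\<lambda>x. (1/s) * h x"] ip_scale[of "1/s" h h] s0 ss pos
      by (simp add: power2_eq_square)
    have rr: "R h' = R h / s^2"
    proof -
      have "R h' = (1/s) * ((1/s) * ipp (P h) (P h)) - 1/4 * ((1/s) * ((1/s) * ipp h h))"
        unfolding R_def e1 e2 P_scale_fun ip_scale
        by (metis (no_types) ip_scale ip_sym)
      thus ?thesis unfolding R_def using s0 by (simp add: field_simps power2_eq_square)
    qed
    have "h' \<in> topspace X" unfolding X_def h'_def by simp
    hence "h' \<in> K" unfolding K_def using i1 by simp
    hence "R g0 \<le> R h'" using g0(2) by blast
    hence "m \<le> R h / s^2" using rr unfolding m_def by simp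
    hence "m * s^2 \<le> R h" using s0 by (simp add: field_simps)
    thus ?thesis using ss by simp
  qed
  have nn: "ipp (P h) (P h) - (1/4 + m) * ipp h h \<ge> 0" for h
    using claim[of h] unfolding R_def by (simp add: algebra_simps)
  have z: "ipp (P g0) (P g0) - (1/4 + m) * ipp g0 g0 = 0"
    using g0i unfolding m_def R_def by simp
  have ev: "P (P g0) v = (1/4 + m) * g0 v" if "v \<in> V" for v
    using variation[OF nn z that] .
  have mge: "1/4 + m \<ge> 0"
    using ip_nonneg[of "P g0"] g0i unfolding m_def R_def by simp
  define s where "s = sqrt (1/4 + m)"
  have s0: "s \<ge> 0" and s2: "s * s = 1/4 + m" unfolding s_def using mge by auto
  have g0nz: "\<exists>v\<in>V. g0 v \<noteq> 0"
  proof (rule ccontr)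
    assume "\<not> ?thesis"
    hence "ipp g0 g0 = 0" by (simp add: ip_def)
    thus False using g0i by simp
  qed
  define g1 where "g1 = (\<lambda>x. P g0 x + s * g0 x)"
  have "1/2 \<le> s"
  proof (cases "\<exists>v\<in>V. g1 v \<noteq> 0")
    case True
    have "\<forall>v\<in>V. P g1 v = s * g1 v"
    proof
      fix v assume v: "v \<in> V"
      have "P g1 v = P (P g0) v + s * P g0 v" unfolding g1_def P_add_fun by simp
      also have "P (P g0) v = (s * s) * g0 v" using ev[OF v] s2 by simp
      hence "P (P g0) v + s * P g0 v = s * g1 v" unfolding g1_def by (simp add: algebra_simps)
      finally show "P g1 v = s * g1 v" .
    qed
    hence "1/2 \<le> \<bar>s\<bar>" by (rule H[OF True])
    thus ?thesis using s0 by simp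
  next
    case False
    hence "\<forall>v\<in>V. P g0 v = (-s) * g0 v" unfolding g1_def by auto
    hence "1/2 \<le> \<bar>-s\<bar>" by (rule H[OF g0nz])
    thus ?thesis using s0 by simp
  qed
  hence "1/2 * (1/2) \<le> s * s" using mult_mono[of "1/2" s "1/2" s] by simp
  hence "1/4 \<le> s * s" by simp
  hence "m \<ge> 0" using s2 by simp
  hence "m * ipp g g \<ge> 0" using ip_nonneg by simp
  thus ?thesis using claim[of g] unfolding R_def by simp
qed

lemma eqcase:
  assumes "ipp (P g) (P g) = 1/4 * ipp g g" "v \<in> V"
  shows "P (P g) v = 1/4 * g v"
  by (rule variation[OF psd]) (use assms in auto)

end



interpretation fvs: vector_space "\<lambda>(c::real) (f::'a\<Rightarrow>real). (\<lambda>x. c * f x)"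
  by unfold_locales (auto simp: fun_eq_iff algebra_simps)

lemma sum_fun_apply: "(\<Sum>g\<in>G. (f g :: 'a \<Rightarrow> real)) x = (\<Sum>g\<in>G. f g x)"
  by (induction G rule: infinite_finite_induct) auto

context gr
begin

lemma ip_sum: "ipp (\<lambda>x. \<Sum>g\<in>G. u g * g x) h = (\<Sum>g\<in>G. u g * ipp g h)"
  unfolding ip_def
  by (simp add: sum_distrib_left sum_distrib_right algebra_simps sum.swap[of _ G V])

lemma eig_fin: "finite (laplacian_eigenvalues V E)"
proof -
  define S where "S = laplacian_eigenvalues V E"
  define F where "F = (\<lambda>mu x. if x \<in> V then (SOME f. (\<exists>v\<in>V. f v \<noteq> 0) \<and> (\<forall>v\<in>V. norm_laplacian V E f v = mu * f v)) x else 0)"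
  have Fp: "(\<exists>v\<in>V. F mu v \<noteq> 0) \<and> (\<forall>v\<in>V. P (F mu) v = (1 - mu) * F mu v) \<and> (\<forall>x. x \<notin> V \<longrightarrow> F mu x = 0)"
    if "mu \<in> S" for mu
  proof -
    let ?Q = "\<lambda>f. (\<exists>v\<in>V. f v \<noteq> 0) \<and> (\<forall>v\<in>V. norm_laplacian V E f v = mu * f v)"
    have "\<exists>f. ?Q f" using that unfolding S_def laplacian_eigenvalues_def by blast
    hence q: "?Q (SOME f. ?Q f)" by (rule someI_ex)
    define f where "f = (SOME f. ?Q f)"
    have Ff: "F mu = (\<lambda>x. if x \<in> V then f x else 0)" unfolding F_def f_def by simp
    have Pf: "P (F mu) v = P f v" for v unfolding Ff by (rule P_cong) simp
    show ?thesis
    proof (intro conjI allI impI ballI)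
      show "\<exists>v\<in>V. F mu v \<noteq> 0" using q unfolding Ff f_def by auto
      fix v assume v: "v \<in> V"
      have "norm_laplacian V E f v = mu * f v" using q v unfolding f_def by blast
      hence "P f v = (1 - mu) * f v" unfolding norm_laplacian_def Pop_def by (simp add: algebra_simps)
      thus "P (F mu) v = (1 - mu) * F mu v" using v Pf unfolding Ff by simp
    next
      fix x assume "x \<notin> V" thus "F mu x = 0" unfolding Ff by simp
    qed
  qed
  have orth: "ipp (F mu) (F nu) = 0" if "mu \<in> S" "nu \<in> S" "mu \<noteq> nu" for mu nu
  proof -
    have "ipp (P (F mu)) (F nu) = ipp (\<lambda>x. (1 - mu) * F mu x) (F nu)"
      using Fp[OF that(1)] by (intro ip_cong) auto
    hence a: "ipp (P (F mu)) (F nu) = (1 - mu) * ipp (F mu) (F nu)" by (simp add: ip_scale)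
    have "ipp (F mu) (P (F nu)) = ipp (F mu) (\<lambda>x. (1 - nu) * F nu x)"
      using Fp[OF that(2)] by (intro ip_cong) auto
    hence b: "ipp (F mu) (P (F nu)) = (1 - nu) * ipp (F mu) (F nu)"
      by (metis ip_scale ip_sym)
    have "(1 - mu) * ipp (F mu) (F nu) = (1 - nu) * ipp (F mu) (F nu)"
      using a b self_adj[of "F mu" "F nu"] by argo
    hence "(nu - mu) * ipp (F mu) (F nu) = 0" by (simp add: algebra_simps)
    thus ?thesis using that(3) by simp
  qed
  have ipos: "ipp (F mu) (F mu) > 0" if "mu \<in> S" for mu
    using Fp[OF that] ip_pos by blast
  have inj: "inj_on F S"
  proof (rule inj_onI)
    fix mu nu assume "mu \<in> S" "nu \<in> S" "F mu = F nu"
    show "mu = nu"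
    proof (rule ccontr)
      assume "mu \<noteq> nu"
      hence "ipp (F mu) (F nu) = 0" using orth \<open>mu \<in> S\<close> \<open>nu \<in> S\<close> by blast
      moreover have "ipp (F mu) (F mu) > 0" using ipos \<open>mu \<in> S\<close> by blast
      ultimately show False using \<open>F mu = F nu\<close> by simp
    qed
  qed
  define D where "D = (\<lambda>v. (\<lambda>x. if x = v then 1 else 0 :: real)) ` V"
  have spanD: "F mu \<in> fvs.span D" if "mu \<in> S" for mu
  proof -
    have "F mu = (\<Sum>v\<in>V. (\<lambda>x. F mu v * (if x = v then 1 else 0)))"
    proof
      fix x
      show "F mu x = (\<Sum>v\<in>V. (\<lambda>x. F mu v * (if x = v then 1 else 0))) x"
      proof -
        have "(\<Sum>v\<in>V. F mu v * (if x = v then 1 else 0)) = (\<Sum>v\<in>V. if x = v then F mu x else 0)"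
          by (intro sum.cong) auto
        also have "\<dots> = F mu x" using Fp[OF that] finV by (simp add: sum.delta)
        finally show ?thesis unfolding sum_fun_apply by simp
      qed
    qed
    also have "\<dots> \<in> fvs.span D"
      by (intro fvs.span_sum fvs.span_scale fvs.span_base) (auto simp: D_def)
    finally show ?thesis .
  qed
  have bound: "card A \<le> card V" if "A \<subseteq> S" "finite A" for A
  proof -
    have fA: "finite (F ` A)" using that(2) by simp
    have indep: "fvs.independent (F ` A)"
    proof
      assume "fvs.dependent (F ` A)"
      then obtain u where u: "\<exists>g\<in>F ` A. u g \<noteq> 0" "(\<Sum>g\<in>F ` A. (\<lambda>x. u g * g x)) = 0"
        using fvs.dependent_finite[OF fA] by auto
      then obtain mu where mu: "mu \<in> A" "u (F mu) \<noteq> 0" by auto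
      have z: "(\<lambda>x. \<Sum>g\<in>F ` A. u g * g x) = (\<lambda>x. 0)"
      proof
        fix x show "(\<Sum>g\<in>F ` A. u g * g x) = 0"
          using fun_cong[OF u(2), of x] unfolding sum_fun_apply by simp
      qed
      have "0 = ipp (\<lambda>x. \<Sum>g\<in>F ` A. u g * g x) (F mu)" unfolding z by (simp add: ip_def)
      also have "\<dots> = (\<Sum>g\<in>F ` A. u g * ipp g (F mu))" by (rule ip_sum)
      also have "\<dots> = u (F mu) * ipp (F mu) (F mu) + (\<Sum>g\<in>F ` A - {F mu}. u g * ipp g (F mu))"
        using sum.remove[OF fA, of "F mu"] mu(1) by simp
      also have "(\<Sum>g\<in>F ` A - {F mu}. u g * ipp g (F mu)) = 0"
      proof (rule sum.neutral, rule ballI)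
        fix g assume "g \<in> F ` A - {F mu}"
        then obtain nu where nu: "nu \<in> A" "g = F nu" "F nu \<noteq> F mu" by auto
        hence "nu \<noteq> mu" by auto
        hence "ipp (F nu) (F mu) = 0" using orth nu(1) mu(1) that(1) by blast
        thus "u g * ipp g (F mu) = 0" using nu(2) by simp
      qed
      finally have "u (F mu) * ipp (F mu) (F mu) = 0" by simp
      moreover have "ipp (F mu) (F mu) > 0" using ipos mu(1) that(1) by blast
      ultimately show False using mu(2) by simp
    qed
    have fD: "finite D" unfolding D_def using finV by simp
    have "F ` A \<subseteq> fvs.span D" using spanD that(1) by blast
    from fvs.independent_span_bound[OF fD indep this]
    have "finite (F ` A) \<and> card (F ` A) \<le> card D" .
    moreover have "card D \<le> card V" unfolding D_def using finV by (rule card_image_le)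
    moreover have "inj_on F A" using inj that(1) by (rule inj_on_subset)
    hence "card (F ` A) = card A" by (rule card_image)
    ultimately show ?thesis by simp
  qed
  show ?thesis
  proof (rule ccontr)
    assume "\<not> finite (laplacian_eigenvalues V E)"
    then obtain A where "finite A" "card A = Suc (card V)" "A \<subseteq> S"
      using infinite_arbitrarily_large unfolding S_def by blast
    thus False using bound[of A] by simp
  qed
qed

end



lemma card2_eq: "card S = 2 \<Longrightarrow> x \<in> S \<Longrightarrow> y \<in> S \<Longrightarrow> x \<noteq> y \<Longrightarrow> S = {x, y}"
  by (auto simp: card_2_iff)

lemma card2_other: "card S = 2 \<Longrightarrow> x \<in> S \<Longrightarrow> \<exists>p. S = {x, p} \<and> p \<noteq> x"
  by (auto simp: card_2_iff)

lemma sum_two: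
  fixes al be :: real
  assumes "finite S" "a \<noteq> c"
  shows "(\<Sum>t\<in>S. if t = a then al else if t = c then be else 0) = (if a \<in> S then al else 0) + (if c \<in> S then be else 0)"
proof -
  have "(\<Sum>t\<in>S. if t = a then al else if t = c then be else 0) = (\<Sum>t\<in>S. (if t = a then al else 0) + (if t = c then be else 0))"
    using assms(2) by (intro sum.cong) auto
  also have "\<dots> = (if a \<in> S then al else 0) + (if c \<in> S then be else 0)"
    using assms(1) by (simp add: sum.distrib sum.delta')
  finally show ?thesis .
qed

context gspec
begin

lemma ip_two:
  assumes "a \<in> V" "c \<in> V" "a \<noteq> c"
  shows "ipp (\<lambda>t. if t = a then al else if t = c then be else 0) (\<lambda>t. if t = a then al else if t = c then be else 0)
     = real (dg a) * al * al + real (dg c) * be * be"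
proof -
  have "ipp (\<lambda>t. if t = a then al else if t = c then be else 0) (\<lambda>t. if t = a then al else if t = c then be else 0)
     = (\<Sum>t\<in>V. if t = a then real (dg a) * al * al else if t = c then real (dg c) * be * be else 0)"
    unfolding ip_def by (intro sum.cong) auto
  also have "\<dots> = real (dg a) * al * al + real (dg c) * be * be"
    using sum_two[OF finV assms(3)] assms by simp
  finally show ?thesis .
qed

lemma P_two:
  assumes "a \<noteq> c"
  shows "P (\<lambda>t. if t = a then al else if t = c then be else 0) z
     = ((if E z a then al else 0) + (if E z c then be else 0)) / real (dg z)"
  unfolding Pop_def sum_two[OF finN assms] inN ..

lemma lemA:
  assumes mind: "\<And>x. x \<in> V \<Longrightarrow> dg x \<ge> 2"
    and V: "a \<in> V" "b \<in> V" "c \<in> V"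
    and Na: "N a = {b, p}" and Nb: "N b = {a, c}" and Nc: "N c = {b, q}"
    and d: "p \<noteq> b" "q \<noteq> b" "a \<noteq> c" "p \<noteq> c"
  shows "p \<noteq> q \<and> dg p = 2 \<and> dg q = 2 \<and> (\<exists>r. N p = {a, r} \<and> N q = {c, r} \<and> r \<noteq> a \<and> r \<noteq> c)"
proof -
  have Eap: "E a p" "E p a" using Na inN Esym by blast+
  have Ecq: "E c q" "E q c" using Nc inN Esym by blast+
  have pV: "p \<in> V" and qV: "q \<in> V" using Eap Ecq EV by blast+
  have Eza: "E z a \<longleftrightarrow> z = b \<or> z = p" for z using Na inN Esym by blast
  have Ezc: "E z c \<longleftrightarrow> z = b \<or> z = q" for z using Nc inN Esym by blast
  define f where "f = (\<lambda>t. if t = a then 1 else if t = c then -1 else (0::real))"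
  have fa: "f a \<noteq> 0" unfolding f_def by simp
  have Pf: "P f z = ((if z = b \<or> z = p then 1 else 0) + (if z = b \<or> z = q then -1 else 0)) / real (dg z)" for z
    unfolding f_def P_two[OF d(3)] Eza Ezc ..
  have ipf: "ipp f f = 4" unfolding f_def ip_two[OF V(1,3) d(3)]
    using Na Nc d(1,2) by (simp add: deg_def card_2_iff)
  have pq: "p \<noteq> q"
  proof
    assume pq: "p = q"
    have "\<forall>z\<in>V. P f z = 0 * f z" unfolding Pf pq by auto
    hence "1/2 \<le> \<bar>0::real\<bar>" using H fa V(1) by blast
    thus False by simp
  qed
  have dp2: "dg p \<ge> 2" and dq2: "dg q \<ge> 2" using mind pV qV by auto
  have pa: "p \<noteq> a" using Eap Eirr by blast
  have qc: "q \<noteq> c" using Ecq Eirr by blast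
  define g where "g = (\<lambda>t. if t = p then 1 / real (dg p) else if t = q then -1 / real (dg q) else (0::real))"
  have Pfg: "P f z = g z" for z
    unfolding Pf g_def using pq d(1,2) by auto
  have PfP: "P f = g" using Pfg by auto
  have ipg: "ipp (P f) (P f) = 1 / real (dg p) + 1 / real (dg q)"
    unfolding PfP g_def ip_two[OF pV qV pq] using dp2 dq2 by (simp add: field_simps)
  have "ipp (P f) (P f) - 1/4 * ipp f f \<ge> 0" by (rule psd)
  hence ge: "1 / real (dg p) + 1 / real (dg q) \<ge> 1" unfolding ipg ipf by simp
  have l1: "1 / real (dg p) \<le> 1/2" and l2: "1 / real (dg q) \<le> 1/2" using dp2 dq2 by (auto simp: field_simps)
  have "1 / real (dg p) = 1/2" "1 / real (dg q) = 1/2" using ge l1 l2 by linarith+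
  hence dp: "dg p = 2" and dq: "dg q = 2" by (auto simp: field_simps)
  have eqc: "ipp (P f) (P f) = 1/4 * ipp f f" unfolding ipg ipf dp dq by simp
  obtain r where Np: "N p = {a, r}" and ra: "r \<noteq> a"
    using card2_other[of "N p" a] dp Eap inN unfolding deg_def by blast
  have Epr: "E p r" "E r p" using Np inN Esym by blast+
  have rV: "r \<in> V" using Epr EV by blast
  have rc: "r \<noteq> c"
  proof
    assume "r = c"
    hence "E c p" using Epr by simp
    hence "p \<in> N c" using inN by blast
    thus False using Nc d(1) pq by auto
  qed
  have fr: "f r = 0" unfolding f_def using ra rc by simp
  have "P (P f) r = 1/4 * f r" by (rule eqcase[OF eqc rV])
  hence "P g r = 0" using fr PfP by simp
  hence "((if E r p then 1 / real (dg p) else 0) + (if E r q then -1 / real (dg q) else 0)) / real (dg r) = 0"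
    unfolding g_def P_two[OF pq] .
  moreover have "dg r \<ge> 2" using mind rV by simp
  ultimately have "(if E r p then 1 / real (dg p) else 0) + (if E r q then -1 / real (dg q) else 0) = 0"
    by simp
  hence "E r q" using Epr dp dq by (auto split: if_splits)
  hence "r \<in> N q" using inN Esym by blast
  moreover obtain r' where Nq: "N q = {c, r'}" "r' \<noteq> c"
    using card2_other[of "N q" c] dq Ecq inN unfolding deg_def by blast
  ultimately have "N q = {c, r}" using rc by auto
  thus ?thesis using pq dp dq Np ra rc by blast
qed

end



lemma closure_all:
  assumes conn: "connected_graph V E" and u: "u \<in> V" and uC: "u \<in> C"
    and cl: "\<And>a b. a \<in> C \<Longrightarrow> E a b \<Longrightarrow> b \<in> C" and CV: "C \<subseteq> V"
  shows "V = C"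
proof
  show "V \<subseteq> C"
  proof
    fix z assume "z \<in> V"
    hence "E\<^sup>*\<^sup>* u z" using conn u unfolding connected_graph_def by blast
    thus "z \<in> C" by (induction rule: rtranclp_induct) (use uC cl in auto)
  qed
qed (rule CV)

theorem mainTheorem8:
  fixes V :: "'a set" and E :: "'a \<Rightarrow> 'a \<Rightarrow> bool"
  assumes "simple_graph V E"
    and "connected_graph V E"
    and "card V \<ge> 3"
    and "min_degree V E = 2"
    and "spectral_eps V E = 1/2"
    and "u \<in> V" "v \<in> V" "w \<in> V" "u \<noteq> v" "v \<noteq> w" "u \<noteq> w"
    and "E u v" "E v w"
    and "deg V E u = 2" "deg V E v = 2" "deg V E w = 2"
  shows "is_cycle_graph V E 3 \<or> is_cycle_graph V E 6"
proof -
  note sg = assms(1) and conn = assms(2)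
  have finV: "finite V" using sg by (simp add: simple_graph_def)
  have Vne: "V \<noteq> {}" using assms(6) by auto
  have mind: "deg V E x \<ge> 2" if "x \<in> V" for x
  proof -
    have "Min (deg V E ` V) \<le> deg V E x" using finV that by simp
    thus ?thesis using assms(4) unfolding min_degree_def by simp
  qed
  have deg1: "deg V E x \<ge> 1" if "x \<in> V" for x using mind[OF that] by linarith
  interpret gr V E
    by unfold_locales (use sg deg1 in auto)
  have H: "1/2 \<le> \<bar>c\<bar>" if h1: "\<exists>v\<in>V. h v \<noteq> 0" and h2: "\<forall>v\<in>V. P h v = c * h v" for h c
  proof -
    have "1 - c \<in> laplacian_eigenvalues V E"
      unfolding laplacian_eigenvalues_def
    proof (intro CollectI exI[of _ h] conjI ballI h1)
      fix z assume z: "z \<in> V"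
      show "norm_laplacian V E h z = (1 - c) * h z"
        using h2 z unfolding norm_laplacian_def Pop_def by (simp add: algebra_simps)
    qed
    hence mem: "\<bar>1 - (1 - c)\<bar> \<in> (\<lambda>mu. \<bar>1 - mu\<bar>) ` laplacian_eigenvalues V E" by (rule imageI)
    have "spectral_eps V E \<le> \<bar>1 - (1 - c)\<bar>"
      unfolding spectral_eps_def by (rule Min_le[OF finite_imageI[OF eig_fin] mem])
    thus ?thesis using assms(5) by simp
  qed
  interpret gspec V E
    by unfold_locales (use H Vne in blast)+
  have inN': "E a b \<longleftrightarrow> b \<in> N a" for a b using inN by blast
  have Nv: "N v = {u, w}"
    using card2_eq[of "N v" u w] assms inN Esym unfolding deg_def by blast
  obtain x where Nu: "N u = {v, x}" and xv: "x \<noteq> v"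
    using card2_other[of "N u" v] assms inN unfolding deg_def by blast
  obtain y where Nw: "N w = {v, y}" and yv: "y \<noteq> v"
    using card2_other[of "N w" v] assms inN Esym unfolding deg_def by blast
  show ?thesis
  proof (cases "x = w")
    case True
    have "u \<in> N w"
    proof -
      have "w \<in> N u" using Nu True by simp
      hence "E u w" by (simp add: inN)
      hence "E w u" by (rule Esym)
      thus ?thesis by (simp add: inN)
    qed
    hence yu: "y = u" using Nw assms(9) by auto
    have Nw': "N w = {v, u}" using Nw yu by simp
    have Nu': "N u = {v, w}" using Nu True by simp
    define C where "C = {u, v, w}"
    have cl: "b \<in> C" if "a \<in> C" "E a b" for a b
    proof -
      have "b \<in> N a" using that(2) by (simp add: inN)
      thus ?thesis using that(1) Nu' Nv Nw' by (auto simp: C_def)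
    qed
    have VC: "V = C"
      by (rule closure_all[OF conn assms(6)]) (use cl assms(6-8) in \<open>auto simp: C_def\<close>)
    define \<phi> where "\<phi> = (\<lambda>z. if z = u then 0 else if z = v then 1 else (2::nat))"
    have "bij_betw \<phi> V {0..<3}"
      unfolding VC C_def \<phi>_def bij_betw_def inj_on_def using assms(9-11) by auto
    moreover have "E a b \<longleftrightarrow> cycle_edge 3 (\<phi> a) (\<phi> b)" if "a \<in> V" "b \<in> V" for a b
    proof -
      have ab: "a \<in> {u, v, w}" "b \<in> {u, v, w}" using that VC C_def by auto
      have "E a b \<longleftrightarrow> b \<in> N a" by (simp add: inN)
      also have "\<dots> \<longleftrightarrow> cycle_edge 3 (\<phi> a) (\<phi> b)"
        using ab Nu' Nv Nw' assms(9-11) by (auto simp: \<phi>_def cycle_edge_def)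
      finally show ?thesis .
    qed
    ultimately show ?thesis unfolding is_cycle_graph_def by blast
  next
    case False
    have yu: "y \<noteq> u"
    proof
      assume "y = u"
      hence "E w u" using Nw inN by blast
      hence "w \<in> N u" using inN Esym by blast
      thus False using Nu False assms(10) by auto
    qed
    note A1 = lemA[OF mind assms(6,7,8) Nu Nv Nw xv yv assms(11) False]
    then obtain r where xy: "x \<noteq> y" and dx: "dg x = 2" and dy: "dg y = 2"
      and Nx: "N x = {u, r}" and Ny: "N y = {w, r}" and ru: "r \<noteq> u" and rw: "r \<noteq> w" by blast
    have Eux: "E u x" unfolding inN[symmetric] Nu by simp
    have Ewy: "E w y" unfolding inN[symmetric] Nw by simp
    have Exr: "E x r" unfolding inN[symmetric] Nx by simp
    have Eyr: "E y r" unfolding inN[symmetric] Ny by simp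
    have xu: "x \<noteq> u" using Eux Eirr by metis
    have yw: "y \<noteq> w" using Ewy Eirr by metis
    have rx: "r \<noteq> x" using Exr Eirr by metis
    have ry: "r \<noteq> y" using Eyr Eirr by metis
    have xV: "x \<in> V" using Eux EV by blast
    have yV: "y \<in> V" using Ewy EV by blast
    have rV: "r \<in> V" using Exr EV by blast
    have rv: "r \<noteq> v"
    proof
      assume "r = v"
      hence "E x v" using Nx inN by blast
      hence "x \<in> N v" using inN Esym by blast
      thus False using Nv xu False by auto
    qed
    have Nu2: "N u = {x, v}" using Nu by auto
    note A2 = lemA[OF mind xV assms(6,7) Nx Nu2 Nv ru assms(11)[symmetric] xv rv]
    hence dr: "dg r = 2" by blast
    have Nr: "N r = {x, y}"
      using card2_eq[of "N r" x y] dr xy Nx Ny inN Esym unfolding deg_def by blast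
    define C where "C = {u, v, w, x, y, r}"
    have cl: "b \<in> C" if "a \<in> C" "E a b" for a b
    proof -
      have "b \<in> N a" using that(2) by (simp add: inN)
      thus ?thesis using that(1) Nu Nv Nw Nx Ny Nr by (auto simp: C_def)
    qed
    have VC: "V = C"
      by (rule closure_all[OF conn assms(6)]) (use cl assms(6-8) xV yV rV in \<open>auto simp: C_def\<close>)
    define \<phi> where "\<phi> = (\<lambda>z. if z = u then 0 else if z = v then 1 else if z = w then 2
       else if z = y then 3 else if z = r then 4 else (5::nat))"
    note dist0 = assms(9-11) xv xu False yv yu yw xy rx ry ru rw rv
    note dist = dist0 dist0[THEN not_sym]
    have phis: "\<phi> u = 0" "\<phi> v = 1" "\<phi> w = 2" "\<phi> y = 3" "\<phi> r = 4" "\<phi> x = 5"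
      unfolding \<phi>_def using dist by simp_all
    have cC: "card C = 6" unfolding C_def using dist by simp
    have imC: "\<phi> ` C = {0..<6}"
    proof -
      have "\<phi> ` C = {0,1,2,5,3,4}" unfolding C_def using phis by simp
      also have "\<dots> = {0..<6}" by auto
      finally show ?thesis .
    qed
    have "bij_betw \<phi> V {0..<6}"
    proof -
      have "inj_on \<phi> C" using cC imC finV VC by (intro eq_card_imp_inj_on) auto
      thus ?thesis unfolding VC bij_betw_def using imC by blast
    qed
    moreover have "E a b \<longleftrightarrow> cycle_edge 6 (\<phi> a) (\<phi> b)" if "a \<in> V" "b \<in> V" for a b
    proof -
      have ab: "a \<in> C" "b \<in> C" using that VC by auto
      have "E a b \<longleftrightarrow> b \<in> N a" by (simp add: inN)
      also have "\<dots> \<longleftrightarrow> cycle_edge 6 (\<phi> a) (\<phi> b)"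
        using ab unfolding C_def by (auto simp: Nu Nv Nw Nx Ny Nr phis dist cycle_edge_def)
      finally show ?thesis .
    qed
    ultimately show ?thesis unfolding is_cycle_graph_def by blast
  qed
qed


end
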